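(* For all $n\ge1$, $$\varphi_n=2(n-1)H_n+2P_n,\qquad \theta_n=(2n-1)P_n.$$
   Context: Let $s=\sqrt3/2$. Consider the standard triangular lattice in the plane whose vertices are the points $(a+b/2,\,bs)$ with $a,b\in\mathbb Z$ and whose edges are the unit segments joining lattice points in the directions $0^\circ,60^\circ,120^\circ$; it divides the plane into unit equilateral triangles called cells. A small tile is a single cell; a large tile is an equilateral triangle of side $2$ whose vertices are lattice points (so it is a union of $4$ cells; it may point up or down). For a region $R$ that is a finite union of cells, a tiling of $R$ is a finite set of small and large tiles, each contained in $R$, with pairwise disjoint interiors and union equal to $R$. For $n\ge1$, the region $H_n$ is the union of the trapezoid with vertices $(0,0),(n,0),(n-\tfrac12,s),(\tfrac12,s)$ and the trapezoid with vertices $(\tfrac12,s),(n-\tfrac12,s),(n,2s),(0,2s)$ ($4n-2$ cells; for $n=1$ two unit triangles meeting at a point), and $P_n$ is $H_n$ with the cell with vertices $(n-1,0),(n,0),(n-\tfrac12,s)$ removed. $H_n$ and $P_n$ also denote the numbers of tilings of these regions; thus $H_n=\frac{(1+\sqrt2)^n+(1-\sqrt2)^n}{2}$ and $P_n=\frac{(1+\sqrt2)^n-(1-\sqrt2)^n}{2\sqrt2}$. Define $\varphi_n$ (resp. $\theta_n$) as the sum, over all tilings of $H_n$ (resp. $P_n$), of the number of small tiles in the tiling. *)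

theory Defs
  imports Main
begin

text \<open>Lattice coordinates: the lattice point (a,b) :: int * int is the plane point
  (a + b/2, b*sqrt 3/2).  A cell is encoded as (a, b, True) for the upward cell with
  vertices (a,b), (a+1,b), (a,b+1), and (a, b, False) for the downward cell with
  vertices (a+1,b), (a,b+1), (a+1,b+1).  Every cell arises exactly once this way.\<close>

type_synonym cell = "int \<times> int \<times> bool"

definition small_tile :: "cell \<Rightarrow> cell set" where
  "small_tile c = {c}"

text \<open>Large upward tile with vertices (a,b), (a+2,b), (a,b+2).\<close>
definition large_up :: "int \<Rightarrow> int \<Rightarrow> cell set" where
  "large_up a b = {(a,b,True), (a+1,b,True), (a,b+1,True), (a,b,False)}"

text \<open>Large downward tile with vertices (a+2,b), (a,b+2), (a+2,b+2).\<close>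
definition large_down :: "int \<Rightarrow> int \<Rightarrow> cell set" where
  "large_down a b = {(a+1,b,False), (a,b+1,False), (a+1,b+1,False), (a+1,b+1,True)}"

definition tiles :: "cell set set" where
  "tiles = range small_tile \<union> {large_up a b | a b. True} \<union> {large_down a b | a b. True}"

definition is_tiling :: "cell set \<Rightarrow> cell set set \<Rightarrow> bool" where
  "is_tiling R T \<longleftrightarrow> finite T \<and> T \<subseteq> tiles \<and> (\<forall>t\<in>T. t \<subseteq> R)
     \<and> (\<forall>t\<in>T. \<forall>u\<in>T. t \<noteq> u \<longrightarrow> t \<inter> u = {}) \<and> \<Union>T = R"

definition tilings :: "cell set \<Rightarrow> cell set set set" where
  "tilings R = {T. is_tiling R T}"

definition num_small :: "cell set set \<Rightarrow> nat" where
  "num_small T = card {t \<in> T. \<exists>c. t = small_tile c}"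

definition Hreg :: "nat \<Rightarrow> cell set" where
  "Hreg n =
     {(a,0,True) | a. 0 \<le> a \<and> a \<le> int n - 1}
   \<union> {(a,0,False) | a. 0 \<le> a \<and> a \<le> int n - 2}
   \<union> {(a,1,True) | a. 0 \<le> a \<and> a \<le> int n - 2}
   \<union> {(a,1,False) | a. -1 \<le> a \<and> a \<le> int n - 2}"

text \<open>P_n: remove the cell with vertices (n-1,0),(n,0),(n-1/2,s).\<close>
definition Preg :: "nat \<Rightarrow> cell set" where
  "Preg n = Hreg n - {(int n - 1, 0, True)}"

definition Hcount :: "nat \<Rightarrow> nat" where "Hcount n = card (tilings (Hreg n))"
definition Pcount :: "nat \<Rightarrow> nat" where "Pcount n = card (tilings (Preg n))"

definition phi :: "nat \<Rightarrow> nat" where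
  "phi n = (\<Sum>T\<in>tilings (Hreg n). num_small T)"
definition theta :: "nat \<Rightarrow> nat" where
  "theta n = (\<Sum>T\<in>tilings (Preg n). num_small T)"

end

theory Submission
  imports Defs
begin


definition cnt :: "cell set \<Rightarrow> nat" where "cnt R = card (tilings R)"
definition sm :: "cell set \<Rightarrow> nat" where "sm R = (\<Sum>T\<in>tilings R. num_small T)"
definition Sset :: "cell set \<Rightarrow> cell \<Rightarrow> cell set set" where
  "Sset R c = {t\<in>tiles. c\<in>t \<and> t\<subseteq>R}"
definition is_small :: "cell set \<Rightarrow> bool" where "is_small t = (\<exists>c. t = small_tile c)"

lemma tiles_nonempty: "t \<in> tiles \<Longrightarrow> t \<noteq> {}"
  unfolding tiles_def small_tile_def large_up_def large_down_def by auto

lemma tilings_sub: "T \<in> tilings R \<Longrightarrow> T \<subseteq> Pow R"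
  unfolding tilings_def is_tiling_def by auto

lemma finite_tilings: "finite R \<Longrightarrow> finite (tilings R)"
  by (rule finite_subset[of _ "Pow (Pow R)"]) (auto dest: tilings_sub)

lemma tilings_empty: "tilings {} = {{}}"
  unfolding tilings_def is_tiling_def using tiles_nonempty by fastforce

lemma notin_tiling:
  assumes "t \<in> tiles" "T \<in> tilings (R - t)" shows "t \<notin> T"
proof
  assume "t \<in> T"
  then have "t \<subseteq> R - t" using tilings_sub[OF assms(2)] by auto
  then show False using tiles_nonempty[OF assms(1)] by auto
qed

lemma peel_bij:
  assumes "c \<in> R"
  shows "bij_betw (\<lambda>(t,T). insert t T) (SIGMA t:Sset R c. tilings (R - t)) (tilings R)"
proof (rule bij_betwI')
  fix x y assume x: "x \<in> (SIGMA t:Sset R c. tilings (R - t))" and y: "y \<in> (SIGMA t:Sset R c. tilings (R - t))"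
  obtain t1 T1 where x1: "x = (t1,T1)" "t1 \<in> Sset R c" "T1 \<in> tilings (R - t1)" using x by auto
  obtain t2 T2 where y1: "y = (t2,T2)" "t2 \<in> Sset R c" "T2 \<in> tilings (R - t2)" using y by auto
  have n1: "t1 \<notin> T1" "t2 \<notin> T2" using x1 y1 notin_tiling unfolding Sset_def by auto
  show "((\<lambda>(t,T). insert t T) x = (\<lambda>(t,T). insert t T) y) = (x = y)"
  proof
    assume eq: "(\<lambda>(t,T). insert t T) x = (\<lambda>(t,T). insert t T) y"
    then have eq': "insert t1 T1 = insert t2 T2" using x1 y1 by simp
    have "t1 = t2"
    proof (rule ccontr)
      assume "t1 \<noteq> t2"
      then have "t1 \<in> T2" using eq' by blast
      then have "t1 \<subseteq> R - t2" using tilings_sub[OF y1(3)] by auto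
      moreover have "c \<in> t1" "c \<in> t2" using x1 y1 unfolding Sset_def by auto
      ultimately show False by auto
    qed
    then have "T1 = T2" using eq' n1
      by (metis insert_ident)
    then show "x = y" using x1 y1 \<open>t1 = t2\<close> by simp
  qed simp
next
  fix x assume x: "x \<in> (SIGMA t:Sset R c. tilings (R - t))"
  obtain t T where x1: "x = (t,T)" "t \<in> Sset R c" "T \<in> tilings (R - t)" using x by auto
  have tR: "t \<subseteq> R" "t \<in> tiles" using x1 unfolding Sset_def by auto
  have "is_tiling (R - t) T" using x1 unfolding tilings_def by auto
  then have a: "finite T" "T \<subseteq> tiles" "\<forall>u\<in>T. u \<subseteq> R - t" "\<forall>u\<in>T. \<forall>v\<in>T. u \<noteq> v \<longrightarrow> u \<inter> v = {}" "\<Union>T = R - t"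
    unfolding is_tiling_def by auto
  have "is_tiling R (insert t T)" unfolding is_tiling_def
  proof (intro conjI)
    show "\<forall>u\<in>insert t T. \<forall>v\<in>insert t T. u \<noteq> v \<longrightarrow> u \<inter> v = {}"
      using a(3,4) by blast
    show "\<Union>(insert t T) = R" using a(5) tR by auto
  qed (use a tR in auto)
  then show "(\<lambda>(t,T). insert t T) x \<in> tilings R" using x1 unfolding tilings_def by simp
next
  fix T assume T: "T \<in> tilings R"
  then have tl: "is_tiling R T" unfolding tilings_def by simp
  then obtain t where t: "t \<in> T" "c \<in> t" using assms unfolding is_tiling_def by auto
  have tS: "t \<in> Sset R c" using tl t unfolding is_tiling_def Sset_def by auto
  have b: "finite T" "T \<subseteq> tiles" "\<forall>u\<in>T. u \<subseteq> R" "\<forall>u\<in>T. \<forall>v\<in>T. u \<noteq> v \<longrightarrow> u \<inter> v = {}" "\<Union>T = R"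
    using tl unfolding is_tiling_def by auto
  have "is_tiling (R - t) (T - {t})" unfolding is_tiling_def
  proof (intro conjI)
    show "\<forall>u\<in>T - {t}. u \<subseteq> R - t" using b(3,4) t by blast
    show "\<Union>(T - {t}) = R - t" using b(4,5) t by blast
  qed (use b in auto)
  then have "(t, T - {t}) \<in> (SIGMA t:Sset R c. tilings (R - t))" using tS unfolding tilings_def by simp
  moreover have "T = (\<lambda>(t,T). insert t T) (t, T - {t})" using t by auto
  ultimately show "\<exists>x\<in>(SIGMA t:Sset R c. tilings (R - t)). T = (\<lambda>(t,T). insert t T) x" by blast
qed

lemma finite_Sset: "finite R \<Longrightarrow> finite (Sset R c)"
  by (rule finite_subset[of _ "Pow R"]) (auto simp: Sset_def)

lemma peel_cnt:
  assumes "c \<in> R" "finite R"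
  shows "cnt R = (\<Sum>t\<in>Sset R c. cnt (R - t))"
proof -
  have "cnt R = card (SIGMA t:Sset R c. tilings (R - t))"
    unfolding cnt_def using bij_betw_same_card[OF peel_bij[OF assms(1)]] by simp
  also have "\<dots> = (\<Sum>t\<in>Sset R c. cnt (R - t))"
    using assms finite_Sset finite_tilings unfolding cnt_def by (simp)
  finally show ?thesis .
qed

lemma num_small_insert:
  assumes "t \<notin> T" "finite T"
  shows "num_small (insert t T) = num_small T + (if is_small t then 1 else 0)"
proof -
  have "{u \<in> insert t T. \<exists>c. u = small_tile c} =
        (if is_small t then insert t {u \<in> T. \<exists>c. u = small_tile c} else {u \<in> T. \<exists>c. u = small_tile c})"
    unfolding is_small_def by auto
  then show ?thesis using assms unfolding num_small_def by auto
qed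

lemma peel_sm:
  assumes "c \<in> R" "finite R"
  shows "sm R = (\<Sum>t\<in>Sset R c. sm (R - t) + (if is_small t then cnt (R - t) else 0))"
proof -
  have "sm R = (\<Sum>x\<in>(SIGMA t:Sset R c. tilings (R - t)). num_small ((\<lambda>(t,T). insert t T) x))"
    unfolding sm_def using sum.reindex_bij_betw[OF peel_bij[OF assms(1)], of num_small] by simp
  also have "\<dots> = (\<Sum>(t,T)\<in>(SIGMA t:Sset R c. tilings (R - t)). num_small (insert t T))"
    by (rule sum.cong) auto
  also have "\<dots> = (\<Sum>t\<in>Sset R c. \<Sum>T\<in>tilings (R - t). num_small (insert t T))"
    using assms finite_Sset finite_tilings by (subst sum.Sigma) auto
  also have "\<dots> = (\<Sum>t\<in>Sset R c. \<Sum>T\<in>tilings (R - t). num_small T + (if is_small t then 1 else 0))"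
  proof (rule sum.cong[OF refl], rule sum.cong[OF refl])
    fix t T assume "t \<in> Sset R c" "T \<in> tilings (R - t)"
    moreover then have "finite T" unfolding tilings_def is_tiling_def by auto
    ultimately show "num_small (insert t T) = num_small T + (if is_small t then 1 else 0)"
      using num_small_insert notin_tiling unfolding Sset_def by auto
  qed
  also have "\<dots> = (\<Sum>t\<in>Sset R c. sm (R - t) + (if is_small t then cnt (R - t) else 0))"
    unfolding sm_def cnt_def by (simp add: sum.distrib) (rule sum.cong; simp)
  finally show ?thesis .
qed

lemma is_small_small[simp]: "is_small (small_tile c)" unfolding is_small_def by blast
lemma is_small_single[simp]: "is_small {c}" using is_small_small unfolding small_tile_def .

lemma forced:
  assumes "c \<in> R" "finite R" "Sset R c = {small_tile c}"
  shows "cnt R = cnt (R - {c})" "sm R = sm (R - {c}) + cnt (R - {c})"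
  using peel_cnt[OF assms(1,2)] peel_sm[OF assms(1,2)] unfolding assms(3)
  by (simp_all add: small_tile_def[symmetric])

lemma two:
  assumes "c \<in> R" "finite R" "Sset R c = {small_tile c, L}" "\<not> is_small L"
  shows "cnt R = cnt (R - {c}) + cnt (R - L)" "sm R = sm (R - {c}) + cnt (R - {c}) + sm (R - L)"
proof -
  have ne: "small_tile c \<noteq> L" using assms(4) unfolding is_small_def by blast
  show "cnt R = cnt (R - {c}) + cnt (R - L)"
    using peel_cnt[OF assms(1,2)] ne unfolding assms(3) by (simp add: small_tile_def)
  show "sm R = sm (R - {c}) + cnt (R - {c}) + sm (R - L)"
    using peel_sm[OF assms(1,2)] assms(4) ne unfolding assms(3) by (simp add: small_tile_def)
qed



definition Qr :: "int \<Rightarrow> int \<Rightarrow> cell set" where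
  "Qr p q = {(a,b,u). (b = 0 \<and> 0 \<le> (if u then 2*a else 2*a+1) \<and> (if u then 2*a else 2*a+1) < p)
                     \<or> (b = 1 \<and> 0 \<le> (if u then 2*a+1 else 2*a+2) \<and> (if u then 2*a+1 else 2*a+2) < q)}"

lemma mem_Qr[simp]: "((a,b,u) \<in> Qr p q) \<longleftrightarrow> ((b = 0 \<and> 0 \<le> (if u then 2*a else 2*a+1) \<and> (if u then 2*a else 2*a+1) < p)
                     \<or> (b = 1 \<and> 0 \<le> (if u then 2*a+1 else 2*a+2) \<and> (if u then 2*a+1 else 2*a+2) < q))"
  unfolding Qr_def by simp

lemma finite_Qr: "finite (Qr p q)"
proof -
  have "Qr p q \<subseteq> {-1..max p q} \<times> {0..1} \<times> UNIV"
  proof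
    fix x assume "x \<in> Qr p q"
    moreover obtain a b u where "x = (a,b,u)" by (cases x) auto
    ultimately show "x \<in> {-1..max p q} \<times> {0..1} \<times> UNIV" by (cases u) auto
  qed
  moreover have "finite ({-1..max p q} \<times> {0..1::int} \<times> (UNIV::bool set))" by simp
  ultimately show ?thesis by (rule finite_subset)
qed

definition cands :: "cell \<Rightarrow> cell set set" where
  "cands c = (case c of (a,b,u) \<Rightarrow> if u then {small_tile (a,b,u), large_up a b, large_up (a-1) b, large_up a (b-1), large_down (a-1) (b-1)}
     else {small_tile (a,b,u), large_up a b, large_down (a-1) b, large_down a (b-1), large_down (a-1) (b-1)})"

lemma up_mem: "((a,b,u) \<in> large_up a' b') \<longleftrightarrow> (u \<and> (a'=a \<and> b'=b \<or> a'=a-1 \<and> b'=b \<or> a'=a \<and> b'=b-1)) \<or> (\<not>u \<and> a'=a \<and> b'=b)"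
  by (cases u) (auto simp: large_up_def)
lemma down_mem: "((a,b,u) \<in> large_down a' b') \<longleftrightarrow> (u \<and> a'=a-1 \<and> b'=b-1) \<or> (\<not>u \<and> (a'=a-1 \<and> b'=b \<or> a'=a \<and> b'=b-1 \<or> a'=a-1 \<and> b'=b-1))"
  by (cases u) (auto simp: large_down_def)

lemma Sset_cands: "Sset R c = {t \<in> cands c. t \<subseteq> R}"
proof -
  obtain a b u where c: "c = (a,b,u)" by (cases c) auto
  have "{t\<in>tiles. c \<in> t} = cands c"
  proof
    show "{t\<in>tiles. c \<in> t} \<subseteq> cands c"
    proof
      fix t assume t: "t \<in> {t\<in>tiles. c \<in> t}"
      then have ct: "c \<in> t" by simp
      from t have "t \<in> range small_tile \<or> t \<in> {large_up a b | a b. True} \<or> t \<in> {large_down a b | a b. True}"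
        unfolding tiles_def by blast
      then show "t \<in> cands c"
      proof (elim disjE)
        assume "t \<in> range small_tile"
        then obtain c' where "t = small_tile c'" by blast
        then show ?thesis using ct unfolding c cands_def small_tile_def by auto
      next
        assume "t \<in> {large_up a b | a b. True}"
        then obtain a' b' where tt: "t = large_up a' b'" by blast
        then have "(a,b,u) \<in> large_up a' b'" using ct c by simp
        then show ?thesis unfolding tt c cands_def up_mem by (cases u) auto
      next
        assume "t \<in> {large_down a b | a b. True}"
        then obtain a' b' where tt: "t = large_down a' b'" by blast
        then have "(a,b,u) \<in> large_down a' b'" using ct c by simp
        then show ?thesis unfolding tt c cands_def down_mem by (cases u) auto
      qed
    qed
    show "cands c \<subseteq> {t\<in>tiles. c \<in> t}"
      unfolding c cands_def tiles_def by (cases u) (auto simp: up_mem down_mem small_tile_def)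
  qed
  then show ?thesis unfolding Sset_def by blast
qed

lemma ns_down: "\<not> is_small (large_down a b)"
  unfolding is_small_def small_tile_def large_down_def by (auto simp: insert_eq_iff)
lemma ns_up: "\<not> is_small (large_up a b)"
  unfolding is_small_def small_tile_def large_up_def by (auto simp: insert_eq_iff)




lemma filter_insert: "{t \<in> insert x A. P t} = (if P x then insert x {t\<in>A. P t} else {t\<in>A. P t})" by auto

lemma cell_ext: "(\<And>a b. ((a,b,True) \<in> A \<longleftrightarrow> (a,b,True) \<in> B) \<and> ((a,b,False) \<in> A \<longleftrightarrow> (a,b,False) \<in> B)) \<Longrightarrow> A = B"
  by (rule set_eqI) (metis (full_types) prod_cases3)

lemma cands_T: "cands (a,b,True) = {small_tile (a,b,True), large_up a b, large_up (a-1) b, large_up a (b-1), large_down (a-1) (b-1)}"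
  by (simp add: cands_def)
lemma cands_F: "cands (a,b,False) = {small_tile (a,b,False), large_up a b, large_down (a-1) b, large_down a (b-1), large_down (a-1) (b-1)}"
  by (simp add: cands_def)
lemma Qr00: "Qr 0 0 = {}" by (rule cell_ext) simp
lemma filter_empty: "{t\<in>{}. P t} = {}" by simp
lemmas tsimps = Sset_cands cands_def filter_insert small_tile_def large_up_def large_down_def


lemma R1a: assumes "n \<ge> 1" shows "Qr (2*n+1) (2*n+1) - {(n-1,1,False)} = Qr (2*n+1) (2*n)"
  using assms apply (intro cell_ext) apply (simp add: large_up_def large_down_def)
  apply presburger? done

lemma R1b: assumes "n \<ge> 1" shows "Qr (2*n+1) (2*n+1) - large_down (n-2) 0 - {(n,0,True)} = Qr (2*n-1) (2*n-2)"
  using assms apply (intro cell_ext) apply (simp add: large_up_def large_down_def)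
  apply presburger? done

lemma R2a: assumes "n \<ge> 1" shows "Qr (2*n+1) (2*n) - {(n,0,True)} = Qr (2*n) (2*n)"
  using assms apply (intro cell_ext) apply (simp add: large_up_def large_down_def)
  apply presburger? done

lemma R2b: assumes "n \<ge> 1" shows "Qr (2*n+1) (2*n) - large_up (n-1) 0 = Qr (2*n-2) (2*n-1)"
  using assms apply (intro cell_ext) apply (simp add: large_up_def large_down_def)
  apply presburger? done

lemma R3a: assumes "n \<ge> 1" shows "Qr (2*n) (2*n) - {(n-1,1,True)} = Qr (2*n) (2*n-1)"
  using assms apply (intro cell_ext) apply (simp add: large_up_def large_down_def)
  apply presburger? done

lemma R4a: assumes "n \<ge> 1" shows "Qr (2*n) (2*n-1) - {(n-1,0,False)} = Qr (2*n-1) (2*n-1)"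
  using assms apply (intro cell_ext) apply (simp add: large_up_def large_down_def)
  apply presburger? done

lemma R5a: assumes "n \<ge> 1" shows "Qr (2*n) (2*n+1) - {(n-1,1,False)} = Qr (2*n) (2*n)"
  using assms apply (intro cell_ext) apply (simp add: large_up_def large_down_def)
  apply presburger? done

lemma R5b: assumes "n \<ge> 1" shows "Qr (2*n) (2*n+1) - large_down (n-2) 0 = Qr (2*n-1) (2*n-2)"
  using assms apply (intro cell_ext) apply (simp add: large_up_def large_down_def)
  apply presburger? done

lemma M1a: assumes "n \<ge> 1" shows "(n,0,True) \<in> Qr (2*n+1) (2*n+1) - large_down (n-2) 0"
  using assms by (simp add: large_up_def large_down_def)

lemma M1b: assumes "n \<ge> 1" shows "(n-1,1,False) \<in> Qr (2*n+1) (2*n+1)"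
  using assms by (simp add: large_up_def large_down_def)

lemma M2: assumes "n \<ge> 1" shows "(n,0,True) \<in> Qr (2*n+1) (2*n)"
  using assms by (simp add: large_up_def large_down_def)

lemma M3: assumes "n \<ge> 1" shows "(n-1,1,True) \<in> Qr (2*n) (2*n)"
  using assms by (simp add: large_up_def large_down_def)

lemma M4: assumes "n \<ge> 1" shows "(n-1,0,False) \<in> Qr (2*n) (2*n-1)"
  using assms by (simp add: large_up_def large_down_def)

lemma M5: assumes "n \<ge> 1" shows "(n-1,1,False) \<in> Qr (2*n) (2*n+1)"
  using assms by (simp add: large_up_def large_down_def)

lemma S1a: assumes "n \<ge> 1" shows "Sset (Qr (2*n+1) (2*n+1) - large_down (n-2) 0) (n,0,True) = {small_tile (n,0,True)}"
  using assms unfolding Sset_cands cands_T cands_F filter_insert filter_empty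
  apply (simp add: small_tile_def)
  apply (simp add: large_up_def)
  apply (simp add: large_down_def)
  apply (simp add: insert_commute)?
  done

lemma S1b: assumes "n \<ge> 1" shows "Sset (Qr (2*n+1) (2*n+1)) (n-1,1,False) = {small_tile (n-1,1,False), large_down (n-2) 0}"
  using assms unfolding Sset_cands cands_T cands_F filter_insert filter_empty
  apply (simp add: small_tile_def)
  apply (simp add: large_up_def)
  apply (simp add: large_down_def)
  apply (simp add: insert_commute)?
  done

lemma S2: assumes "n \<ge> 1" shows "Sset (Qr (2*n+1) (2*n)) (n,0,True) = {small_tile (n,0,True), large_up (n-1) 0}"
  using assms unfolding Sset_cands cands_T cands_F filter_insert filter_empty
  apply (simp add: small_tile_def)
  apply (simp add: large_up_def)
  apply (simp add: large_down_def)
  apply (simp add: insert_commute)?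
  done

lemma S3: assumes "n \<ge> 1" shows "Sset (Qr (2*n) (2*n)) (n-1,1,True) = {small_tile (n-1,1,True)}"
  using assms unfolding Sset_cands cands_T cands_F filter_insert filter_empty
  apply (simp add: small_tile_def)
  apply (simp add: large_up_def)
  apply (simp add: large_down_def)
  apply (simp add: insert_commute)?
  done

lemma S4: assumes "n \<ge> 1" shows "Sset (Qr (2*n) (2*n-1)) (n-1,0,False) = {small_tile (n-1,0,False)}"
  using assms unfolding Sset_cands cands_T cands_F filter_insert filter_empty
  apply (simp add: small_tile_def)
  apply (simp add: large_up_def)
  apply (simp add: large_down_def)
  apply (simp add: insert_commute)?
  done

lemma S5: assumes "n \<ge> 1" shows "Sset (Qr (2*n) (2*n+1)) (n-1,1,False) = {small_tile (n-1,1,False), large_down (n-2) 0}"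
  using assms unfolding Sset_cands cands_T cands_F filter_insert filter_empty
  apply (simp add: small_tile_def)
  apply (simp add: large_up_def)
  apply (simp add: large_down_def)
  apply (simp add: insert_commute)?
  done

lemma Rz:
  "Qr 1 1 - {(-1,1,False)} = Qr 1 0"
  "Qr 1 0 - {(0,0,True)} = Qr 0 0"
  "Qr 0 1 - {(-1,1,False)} = Qr 0 0"
  by (intro cell_ext; simp; presburger?)+

lemma Rzm: "(-1,1,False) \<in> Qr 1 1" "(0,0,True) \<in> Qr 1 0" "(-1,1,False) \<in> Qr 0 1"
  by simp_all

lemma Rzs:
  "Sset (Qr 1 1) (-1,1,False) = {small_tile (-1,1,False)}"
  "Sset (Qr 1 0) (0,0,True) = {small_tile (0,0,True)}"
  "Sset (Qr 0 1) (-1,1,False) = {small_tile (-1,1,False)}"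
  unfolding Sset_cands cands_T cands_F filter_insert filter_empty
  by (simp add: small_tile_def; simp add: large_up_def; simp add: large_down_def)+



lemma cnt_empty: "cnt {} = 1" unfolding cnt_def tilings_empty by simp
lemma sm_empty: "sm {} = 0" unfolding sm_def tilings_empty num_small_def by simp

definition h :: "int \<Rightarrow> int" where "h n = int (cnt (Qr (2*n-1) (2*n-1)))"
definition hs :: "int \<Rightarrow> int" where "hs n = int (sm (Qr (2*n-1) (2*n-1)))"
definition p :: "int \<Rightarrow> int" where "p n = int (cnt (Qr (2*n-2) (2*n-1)))"
definition ps :: "int \<Rightarrow> int" where "ps n = int (sm (Qr (2*n-2) (2*n-1)))"
definition e :: "int \<Rightarrow> int" where "e n = int (cnt (Qr (2*n+1) (2*n)))"
definition es :: "int \<Rightarrow> int" where "es n = int (sm (Qr (2*n+1) (2*n)))"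

lemma Q2n: assumes "n \<ge> 1" shows
  "cnt (Qr (2*n) (2*n)) = cnt (Qr (2*n-1) (2*n-1))"
  "sm (Qr (2*n) (2*n)) = sm (Qr (2*n-1) (2*n-1)) + 2 * cnt (Qr (2*n-1) (2*n-1))"
proof -
  have a: "cnt (Qr (2*n) (2*n)) = cnt (Qr (2*n) (2*n-1))" "sm (Qr (2*n) (2*n)) = sm (Qr (2*n) (2*n-1)) + cnt (Qr (2*n) (2*n-1))"
    using forced[OF M3[OF assms] finite_Qr S3[OF assms]] R3a[OF assms] by simp_all
  have b: "cnt (Qr (2*n) (2*n-1)) = cnt (Qr (2*n-1) (2*n-1))" "sm (Qr (2*n) (2*n-1)) = sm (Qr (2*n-1) (2*n-1)) + cnt (Qr (2*n-1) (2*n-1))"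
    using forced[OF M4[OF assms] finite_Qr S4[OF assms]] R4a[OF assms] by simp_all
  show "cnt (Qr (2*n) (2*n)) = cnt (Qr (2*n-1) (2*n-1))"
    "sm (Qr (2*n) (2*n)) = sm (Qr (2*n-1) (2*n-1)) + 2 * cnt (Qr (2*n-1) (2*n-1))"
    using a b by simp_all
qed

lemma recE: assumes "n \<ge> 1" shows "e n = h n + p n" "es n = hs n + 3 * h n + ps n"
proof -
  have t: "cnt (Qr (2*n+1) (2*n)) = cnt (Qr (2*n) (2*n)) + cnt (Qr (2*n-2) (2*n-1))"
          "sm (Qr (2*n+1) (2*n)) = sm (Qr (2*n) (2*n)) + cnt (Qr (2*n) (2*n)) + sm (Qr (2*n-2) (2*n-1))"
    using two[OF M2[OF assms] finite_Qr S2[OF assms] ns_up] R2a[OF assms] R2b[OF assms] by simp_all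
  show "e n = h n + p n" "es n = hs n + 3 * h n + ps n"
    unfolding e_def es_def h_def hs_def p_def ps_def using t Q2n[OF assms] by simp_all
qed

lemma recH: assumes "n \<ge> 1" shows "h (n+1) = e n + e (n-1)" "hs (n+1) = es n + e n + es (n-1) + e (n-1)"
proof -
  have t: "cnt (Qr (2*n+1) (2*n+1)) = cnt (Qr (2*n+1) (2*n)) + cnt (Qr (2*n+1) (2*n+1) - large_down (n-2) 0)"
          "sm (Qr (2*n+1) (2*n+1)) = sm (Qr (2*n+1) (2*n)) + cnt (Qr (2*n+1) (2*n)) + sm (Qr (2*n+1) (2*n+1) - large_down (n-2) 0)"
    using two[OF M1b[OF assms] finite_Qr S1b[OF assms] ns_down] R1a[OF assms] by simp_all
  have fin: "finite (Qr (2*n+1) (2*n+1) - large_down (n-2) 0)" using finite_Qr by simp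
  have u: "cnt (Qr (2*n+1) (2*n+1) - large_down (n-2) 0) = cnt (Qr (2*n-1) (2*n-2))"
     "sm (Qr (2*n+1) (2*n+1) - large_down (n-2) 0) = sm (Qr (2*n-1) (2*n-2)) + cnt (Qr (2*n-1) (2*n-2))"
    using forced[OF M1a[OF assms] fin S1a[OF assms]] R1b[OF assms] by simp_all
  have i1: "2*(n+1)-1 = 2*n+1" "2*(n-1)+1 = 2*n-1" "2*(n-1) = 2*n-2" by simp_all
  show "h (n+1) = e n + e (n-1)" "hs (n+1) = es n + e n + es (n-1) + e (n-1)"
    unfolding e_def es_def h_def hs_def i1 using t u by simp_all
qed

lemma recP: assumes "n \<ge> 1" shows "p (n+1) = h n + e (n-1)" "ps (n+1) = hs n + 3 * h n + es (n-1)"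
proof -
  have t: "cnt (Qr (2*n) (2*n+1)) = cnt (Qr (2*n) (2*n)) + cnt (Qr (2*n-1) (2*n-2))"
          "sm (Qr (2*n) (2*n+1)) = sm (Qr (2*n) (2*n)) + cnt (Qr (2*n) (2*n)) + sm (Qr (2*n-1) (2*n-2))"
    using two[OF M5[OF assms] finite_Qr S5[OF assms] ns_down] R5a[OF assms] R5b[OF assms] by simp_all
  have i1: "2*(n+1)-1 = 2*n+1" "2*(n+1)-2 = 2*n" "2*(n-1)+1 = 2*n-1" "2*(n-1) = 2*n-2" by simp_all
  show "p (n+1) = h n + e (n-1)" "ps (n+1) = hs n + 3 * h n + es (n-1)"
    unfolding e_def es_def h_def hs_def p_def ps_def i1 using t Q2n[OF assms] by simp_all
qed

lemma base: "h 1 = 1" "hs 1 = 2" "p 1 = 1" "ps 1 = 1" "e 0 = 1" "es 0 = 1"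
proof -
  have a: "cnt (Qr 1 0) = 1" "sm (Qr 1 0) = 1"
    using forced[OF Rzm(2) finite_Qr Rzs(2)] Rz(2) Qr00 cnt_empty sm_empty by simp_all
  have b: "cnt (Qr 1 1) = 1" "sm (Qr 1 1) = 2"
    using forced[OF Rzm(1) finite_Qr Rzs(1)] Rz(1) a by simp_all
  have c: "cnt (Qr 0 1) = 1" "sm (Qr 0 1) = 1"
    using forced[OF Rzm(3) finite_Qr Rzs(3)] Rz(3) Qr00 cnt_empty sm_empty by simp_all
  show "h 1 = 1" "hs 1 = 2" "p 1 = 1" "ps 1 = 1" "e 0 = 1" "es 0 = 1"
    unfolding h_def hs_def p_def ps_def e_def es_def using a b c by simp_all
qed

definition Inv :: "int \<Rightarrow> bool" where
  "Inv n \<longleftrightarrow> e (n-1) = p n \<and> es (n-1) = (2*n-1) * e (n-1) \<and> hs n = 2*(n-1) * h n + 2 * p n \<and> ps n = (2*n-1) * p n"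

lemma Inv_all: "Inv (int m + 1)"
proof (induction m)
  case 0 show ?case unfolding Inv_def using base by simp
next
  case (Suc m)
  define n where "n = int m + 1"
  have n1: "n \<ge> 1" unfolding n_def by simp
  have I: "e (n-1) = p n" "es (n-1) = (2*n-1) * e (n-1)" "hs n = 2*(n-1) * h n + 2 * p n" "ps n = (2*n-1) * p n"
    using Suc.IH unfolding Inv_def n_def by auto
  note E = recE[OF n1] and H = recH[OF n1] and P = recP[OF n1]
  have "e n = p (n+1)" using E P I by simp
  moreover have "es n = (2*(n+1)-1) * e n" using E I by (simp add: algebra_simps)
  moreover have "hs (n+1) = 2*n * h (n+1) + 2 * p (n+1)" using E H P I by (simp add: algebra_simps)
  moreover have "ps (n+1) = (2*(n+1)-1) * p (n+1)" using E P I by (simp add: algebra_simps)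
  ultimately have "Inv (n+1)" unfolding Inv_def by simp
  then show ?case unfolding n_def by (simp add: add.commute)
qed

lemma Hreg_Qr: "Hreg n = Qr (2*int n - 1) (2*int n - 1)"
  apply (intro cell_ext) apply (simp add: Hreg_def) apply presburger done

lemma Preg_Qr: "Preg n = Qr (2*int n - 2) (2*int n - 1)"
  apply (intro cell_ext) apply (simp add: Preg_def Hreg_def) apply presburger done

theorem theorem6:
  fixes n :: nat
  assumes "n \<ge> 1"
  shows "phi n = 2 * (n - 1) * Hcount n + 2 * Pcount n \<and> theta n = (2 * n - 1) * Pcount n"
proof -
  obtain m where m: "n = Suc m" using assms by (cases n) auto
  have I: "Inv (int n)" using Inv_all[of m] m by (simp add: add.commute)
  have hh: "int (Hcount n) = h (int n)" "int (phi n) = hs (int n)"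
           "int (Pcount n) = p (int n)" "int (theta n) = ps (int n)"
    unfolding Hcount_def phi_def Pcount_def theta_def h_def hs_def p_def ps_def Hreg_Qr Preg_Qr
      cnt_def sm_def by simp_all
  have "int (phi n) = int (2 * (n - 1) * Hcount n + 2 * Pcount n)"
    using I assms unfolding Inv_def by (simp add: of_nat_diff hh)
  moreover have "int (theta n) = int ((2 * n - 1) * Pcount n)"
    using I assms unfolding Inv_def by (simp add: of_nat_diff hh)
  ultimately show ?thesis using of_nat_eq_iff by blast
qed


end
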